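(* For all real $x$ and $n\ge 1/2$ the following holds: \begin{equation*} -\sqrt{x^2/4+n+1/2}<\frac{U^{\prime} (n,x)}{U(n,x)}<-\sqrt{x^2 /4+n-1/2} . \end{equation*} The left inequality also holds for $n>-1/2$.
   Context: $U(a,x)$ denotes the standard parabolic cylinder function (as in the NIST Digital Library of Mathematical Functions, Chapter 12), i.e. the solution of $y''(x)-(x^2/4+a)y(x)=0$ that is recessive (decays) as $x\rightarrow+\infty$; $U'(a,x)$ is its derivative with respect to $x$. The parameter $n$ is real. *)

theory Defs
  imports "HOL-Analysis.Analysis"
begin

text \<open>Parabolic cylinder function U(a,x) (DLMF 12.2): the solution of
  y'' = (x^2/4 + a) y which is recessive at +infinity, normalised by the
  standard asymptotics U(a,x) ~ x^(-a-1/2) exp(-x^2/4) as x tends to +infinity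
  (DLMF 12.9.1).  This determines U(a, .) uniquely.\<close>

definition pcf_U :: "real \<Rightarrow> real \<Rightarrow> real" where
  "pcf_U a = (THE f. (\<forall>x. (f has_real_derivative deriv f x) (at x) \<and>
                            (deriv f has_real_derivative (x^2/4 + a) * f x) (at x)) \<and>
                ((\<lambda>x. f x / (x powr (-a - 1/2) * exp (-(x^2)/4))) \<longlongrightarrow> 1) at_top)"

definition pcf_U' :: "real \<Rightarrow> real \<Rightarrow> real" where
  "pcf_U' a x = deriv (pcf_U a) x"

end

theory Submission imports Defs "HOL-Real_Asymp.Real_Asymp" begin


definition w :: "real \<Rightarrow> real \<Rightarrow> real \<Rightarrow> real" where
  "w k x t = (if 0 < t then t powr k * exp (-(t^2)/2 - x*t) else 0)"

definition II :: "real \<Rightarrow> real \<Rightarrow> real" where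
  "II k x = (\<integral>t. w k x t \<partial>lborel)"

definition gg :: "real \<Rightarrow> real \<Rightarrow> real" where
  "gg k t = (if 0 < t then t powr k * exp (-t) else 0)"

lemma w_meas[measurable]: "w k x \<in> borel_measurable borel"
  unfolding w_def by measurable

lemma gg_meas[measurable]: "gg k \<in> borel_measurable borel"
  unfolding gg_def by measurable

lemma gg_has: assumes "k > -1"
  shows "has_bochner_integral lborel (gg k) (Gamma (k+1))"
proof (rule has_bochner_integral_nn_integral)
  show "gg k \<in> borel_measurable lborel" by simp
  show "AE x in lborel. 0 \<le> gg k x" by (auto simp: gg_def)
  show "0 \<le> Gamma (k+1)" using assms by (simp add: Gamma_real_pos less_imp_le)
  have "Gamma (k+1) = nn_integral lborel (\<lambda>t. ennreal (indicator {0..} t * t powr (k+1 - 1) / exp t))"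
    using assms by (intro Gamma_conv_nn_integral_real) simp
  also have "\<dots> = (\<integral>\<^sup>+t. ennreal (gg k t) \<partial>lborel)"
    by (intro nn_integral_cong) (auto simp: gg_def indicator_def exp_minus field_simps)
  finally show "(\<integral>\<^sup>+t. ennreal (gg k t) \<partial>lborel) = ennreal (Gamma (k+1))" by simp
qed

lemma w_bound: "norm (w k x t) \<le> exp ((1-x)^2/2) * gg k t"
proof -
  have e: "(1-x)^2/2 + (-t) - (-(t^2)/2 - x*t) = (t+x-1)^2/2"
    by (simp add: power2_eq_square field_simps)
  have "-(t^2)/2 - x*t \<le> (1-x)^2/2 + (-t)"
    using e zero_le_power2[of "t+x-1"] by linarith
  hence "exp (-(t^2)/2 - x*t) \<le> exp ((1-x)^2/2) * exp (-t)"
    by (simp add: exp_add[symmetric])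
  thus ?thesis unfolding w_def gg_def
    by (auto intro: mult_left_mono simp: mult.assoc mult.left_commute[of "t powr k"])
qed

lemma w_int: assumes "k > -1" shows "integrable lborel (w k x)"
proof (rule Bochner_Integration.integrable_bound)
  show "integrable lborel (\<lambda>t. exp ((1-x)^2/2) * gg k t)"
    using gg_has[OF assms] by (intro integrable_mult_right) (simp add: has_bochner_integral_iff)
  show "w k x \<in> borel_measurable lborel" by simp
  show "AE t in lborel. norm (w k x t) \<le> norm (exp ((1-x)^2/2) * gg k t)"
    using w_bound[of k x] by (auto simp: gg_def)
qed

lemma w_nonneg: "0 \<le> w k x t" by (simp add: w_def)
lemma w_pos: "0 < t \<Longrightarrow> 0 < w k x t" by (simp add: w_def)

lemma integral_pos_lemma:
  fixes g :: "real \<Rightarrow> real"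
  assumes int: "integrable lborel g" and nn: "\<And>t. 0 \<le> g t"
    and pos: "\<And>t. 0 < t \<Longrightarrow> t \<noteq> c \<Longrightarrow> 0 < g t"
  shows "0 < integral\<^sup>L lborel g"
proof -
  have ge: "0 \<le> integral\<^sup>L lborel g" using nn by (simp add: integral_nonneg_AE)
  have "integral\<^sup>L lborel g \<noteq> 0"
  proof
    assume "integral\<^sup>L lborel g = 0"
    hence "AE t in lborel. g t = 0" using integral_nonneg_eq_0_iff_AE[OF int] nn by simp
    then obtain N where N: "N \<in> null_sets lborel" "{t. g t \<noteq> 0} \<subseteq> N"
      by (auto elim!: AE_E simp: eventually_ae_filter)
    define a where "a = max c 0 + 1"
    have "{a<..<a+1} \<subseteq> N"
    proof
      fix t assume "t \<in> {a<..<a+1}"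
      hence "0 < t" "t \<noteq> c" by (auto simp: a_def)
      hence "g t \<noteq> 0" using pos by force
      thus "t \<in> N" using N by auto
    qed
    hence "emeasure lborel {a<..<a+1} \<le> emeasure lborel N"
      using N by (intro emeasure_mono) (auto simp: null_sets_def)
    also have "\<dots> = 0" using N by auto
    finally show False by simp
  qed
  with ge show ?thesis by simp
qed

lemma II_pos: "k > -1 \<Longrightarrow> 0 < II k x"
  unfolding II_def by (rule integral_pos_lemma[where c=0]) (auto simp: w_int w_nonneg w_pos)

lemma II_nonneg: "0 \<le> II k x"
  unfolding II_def by (simp add: integral_nonneg_AE w_nonneg)

lemma w_Suc: "w (k+1) x t = t * w k x t"
  by (auto simp: w_def powr_add)

lemma II_D: assumes "k > -1"
  shows "II k x - h * II (k+1) x \<le> II k (x+h)"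
proof -
  have i1: "integrable lborel (w k x)" and i2: "integrable lborel (w (k+1) x)"
    and i3: "integrable lborel (w k (x+h))" using assms by (auto intro!: w_int)
  have "II k x - h * II (k+1) x = (\<integral>t. w k x t - h * w (k+1) x t \<partial>lborel)"
    unfolding II_def using i1 i2 by simp
  also have "\<dots> \<le> II k (x+h)" unfolding II_def
  proof (rule integral_mono)
    show "integrable lborel (\<lambda>t. w k x t - h * w (k+1) x t)" using i1 i2 by simp
    show "integrable lborel (w k (x+h))" by (fact i3)
    fix t :: real
    show "w k x t - h * w (k+1) x t \<le> w k (x+h) t"
    proof (cases "0 < t")
      case True
      have "1 + (-h*t) \<le> exp (-h*t)" by (rule exp_ge_add_one_self)
      hence "t powr k * exp (-(t^2)/2 - x*t) * (1 - h*t) \<le> t powr k * exp (-(t^2)/2 - x*t) * exp (-h*t)"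
        by (intro mult_left_mono) auto
      moreover have "exp (-(t^2)/2 - x*t) * exp (-h*t) = exp (-(t^2)/2 - (x+h)*t)"
        by (simp add: exp_add[symmetric] algebra_simps)
      ultimately show ?thesis using True unfolding w_Suc by (simp add: w_def algebra_simps)
    qed (simp add: w_def)
  qed
  finally show ?thesis .
qed

lemma II_mono: assumes "k > -1" "x \<le> y" shows "II k y \<le> II k x"
  unfolding II_def
proof (rule integral_mono)
  show "integrable lborel (w k y)" "integrable lborel (w k x)" using assms by (auto intro!: w_int)
  fix t :: real
  show "w k y t \<le> w k x t"
    using assms by (auto simp: w_def intro!: mult_left_mono)
qed

lemma II_lip: assumes "k > -1" "\<bar>h\<bar> \<le> 1"
  shows "\<bar>II (k+1) (x+h) - II (k+1) x\<bar> \<le> \<bar>h\<bar> * II (k+2) (x-1)"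
proof -
  have k1: "k+1 > -1" using assms by simp
  have a: "II (k+1) x - h * II (k+2) x \<le> II (k+1) (x+h)"
    using II_D[OF k1, of x h] by (simp add: add.assoc)
  have b: "II (k+1) (x+h) - (-h) * II (k+2) (x+h) \<le> II (k+1) x"
    using II_D[OF k1, of "x+h" "-h"] by (simp add: add.assoc)
  have c: "II (k+2) x \<le> II (k+2) (x-1)" "II (k+2) (x+h) \<le> II (k+2) (x-1)"
    using assms by (auto intro!: II_mono)
  have d: "0 \<le> II (k+2) x" "0 \<le> II (k+2) (x+h)" by (auto intro: II_nonneg)
  show ?thesis
  proof (cases "h \<ge> 0")
    case True
    have "h * II (k+2) x \<le> h * II (k+2) (x-1)" "h * II (k+2) (x+h) \<le> h * II (k+2) (x-1)"
      using c True by (auto intro: mult_left_mono)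
    moreover have "0 \<le> h * II (k+2) x" "0 \<le> h * II (k+2) (x+h)" using d True by auto
    ultimately show ?thesis using a b True by (simp add: abs_le_iff)
  next
    case False
    have "h * II (k+2) (x-1) \<le> h * II (k+2) x" "h * II (k+2) (x-1) \<le> h * II (k+2) (x+h)"
      using c False by (auto intro: mult_left_mono_neg)
    moreover have "h * II (k+2) x \<le> 0" "h * II (k+2) (x+h) \<le> 0"
      using d False by (auto intro: mult_nonpos_nonneg)
    moreover have "\<bar>h\<bar> = -h" using False by simp
    ultimately show ?thesis using a b unfolding abs_le_iff by simp
  qed
qed

lemma II_cont: assumes "k > -1"
  shows "((\<lambda>h. II (k+1) (x+h)) \<longlongrightarrow> II (k+1) x) (at 0)"
proof -
  have "((\<lambda>h. II (k+1) (x+h) - II (k+1) x) \<longlongrightarrow> 0) (at 0)"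
  proof (rule Lim_null_comparison)
    show "\<forall>\<^sub>F h in at 0. norm (II (k+1) (x+h) - II (k+1) x) \<le> \<bar>h\<bar> * II (k+2) (x-1)"
    proof -
      have "\<forall>\<^sub>F h in at (0::real). \<bar>h\<bar> < 1"
        by (rule eventually_at_ball'[of 1, THEN eventually_mono]) auto
      thus ?thesis by eventually_elim (use II_lip[OF assms] in auto)
    qed
    show "((\<lambda>h. \<bar>h\<bar> * II (k+2) (x-1)) \<longlongrightarrow> 0) (at 0)"
      by (auto intro!: tendsto_eq_intros)
  qed
  thus ?thesis by (rule LIM_zero_cancel)
qed

lemma II_deriv: assumes "k > -1"
  shows "(II k has_real_derivative - II (k+1) x) (at x)"
proof -
  have "((\<lambda>h. (II k (x+h) - II k x) / h - (- II (k+1) x)) \<longlongrightarrow> 0) (at 0)"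
  proof (rule Lim_null_comparison)
    show "\<forall>\<^sub>F h in at 0. norm ((II k (x+h) - II k x) / h - (- II (k+1) x)) \<le> \<bar>II (k+1) (x+h) - II (k+1) x\<bar>"
    proof (rule eventually_at_filter[THEN iffD2, OF always_eventually], intro allI impI)
      fix h :: real assume h: "h \<noteq> 0"
      have a: "II k x - h * II (k+1) x \<le> II k (x+h)" by (rule II_D[OF assms])
      have b: "II k (x+h) - (-h) * II (k+1) (x+h) \<le> II k x"
        using II_D[OF assms, of "x+h" "-h"] by simp
      show "norm ((II k (x+h) - II k x) / h - (- II (k+1) x)) \<le> \<bar>II (k+1) (x+h) - II (k+1) x\<bar>"
      proof (cases "h > 0")
        case True
        have "- II (k+1) x \<le> (II k (x+h) - II k x) / h" using a True by (simp add: field_simps)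
        moreover have "(II k (x+h) - II k x) / h \<le> - II (k+1) (x+h)" using b True by (simp add: field_simps)
        ultimately show ?thesis by (simp add: abs_le_iff)
      next
        case False
        hence hn: "h < 0" using h by simp
        have "(II k (x+h) - II k x) / h \<le> - II (k+1) x" using a hn by (simp add: field_simps)
        moreover have "- II (k+1) (x+h) \<le> (II k (x+h) - II k x) / h" using b hn by (simp add: field_simps)
        ultimately show ?thesis by (simp add: abs_le_iff)
      qed
    qed
    show "((\<lambda>h. \<bar>II (k+1) (x+h) - II (k+1) x\<bar>) \<longlongrightarrow> 0) (at 0)"
      using II_cont[OF assms, of x] by (intro tendsto_rabs_zero) (simp add: LIM_zero_iff)
  qed
  hence "((\<lambda>h. (II k (x+h) - II k x) / h) \<longlongrightarrow> - II (k+1) x) (at 0)"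
    by (rule LIM_zero_cancel)
  thus ?thesis by (simp add: DERIV_def)
qed



lemma lim_top: "((\<lambda>t::real. t powr k * exp (-(t^2)/2 - x*t)) \<longlongrightarrow> 0) at_top"
  by real_asymp

lemma II_rec_gen: assumes k: "k \<ge> 0"
  shows "II (k+1) x + x * II k x - k * II (k-1) x = (if k = 0 then 1 else 0)"
proof -
  define E where "E t = exp (-(t^2)/2 - x*t)" for t
  define F where "F t = - (t powr k * E t)" for t
  define f where "f t = t powr (k+1) * E t + x * (t powr k * E t) - k * (t powr (k-1) * E t)" for t
  have Fd: "(F has_vector_derivative f t) (at t)" if "0 < t" for t
  proof -
    have "(F has_real_derivative f t) (at t)"
      unfolding F_def E_def f_def using that
      by (auto intro!: derivative_eq_intros simp: powr_add powr_diff field_simps)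
    thus ?thesis by (simp add: has_real_derivative_iff_has_vector_derivative)
  qed
  have fc: "isCont f t" if "0 < t" for t
    unfolding f_def E_def using that by (auto intro!: continuous_intros)
  have fw: "indicator (einterval 0 \<infinity>) t *\<^sub>R f t = w (k+1) x t + x * w k x t - k * w (k-1) x t" for t
    by (auto simp: f_def w_def E_def indicator_def einterval_iff zero_ereal_def)
  have i3: "integrable lborel (\<lambda>t. k * w (k-1) x t)"
  proof (cases "k = 0")
    case False thus ?thesis using k by (intro integrable_mult_right w_int) simp
  qed simp
  have fi: "set_integrable lborel (einterval 0 \<infinity>) f"
    unfolding set_integrable_def fw
  proof (rule Bochner_Integration.integrable_diff[OF Bochner_Integration.integrable_add i3])
    show "integrable lborel (w (k+1) x)" using k by (intro w_int) simp
    show "integrable lborel (\<lambda>t. x * w k x t)" using k by (intro integrable_mult_right w_int) simp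
  qed
  have A: "((F \<circ> real_of_ereal) \<longlongrightarrow> (if k = 0 then -1 else 0)) (at_right 0)"
    unfolding zero_ereal_def ereal_tendsto_simps
  proof (cases "k = 0")
    case True
    have "((\<lambda>t. - E t) \<longlongrightarrow> -1) (at_right 0)"
      unfolding E_def by (rule tendsto_eq_intros | simp)+
    moreover have "\<forall>\<^sub>F t in at_right 0. - E t = F t"
      unfolding F_def using True by (auto simp: eventually_at_right_less eventually_at_filter)
    ultimately show "(F \<longlongrightarrow> (if k = 0 then -1 else 0)) (at_right 0)" using True
      by (auto dest: tendsto_cong[THEN iffD1, rotated])
  next
    case False
    have "((\<lambda>t. t powr k) \<longlongrightarrow> 0) (at_right 0)"
      using False k by (intro tendsto_zero_powrI) (auto intro: tendsto_ident_at eventually_at_rightI[of 0 1])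
    hence "((\<lambda>t. - (t powr k * E t)) \<longlongrightarrow> - (0 * E 0)) (at_right 0)"
      unfolding E_def by (intro tendsto_intros) auto
    thus "(F \<longlongrightarrow> (if k = 0 then -1 else 0)) (at_right 0)" using False by (simp add: F_def[abs_def])
  qed
  have B: "((F \<circ> real_of_ereal) \<longlongrightarrow> 0) (at_left \<infinity>)"
    unfolding ereal_tendsto_simps F_def E_def using tendsto_minus[OF lim_top[of k x]] by simp
  have ftc: "(LBINT t=0..\<infinity>. f t) = 0 - (if k = 0 then -1 else 0)"
    by (rule interval_integral_FTC_integrable[OF _ Fd fc fi A B])
       (auto simp: zero_ereal_def)
  have fw': "indicator {0<..} t *\<^sub>R f t = w (k+1) x t + x * w k x t - k * w (k-1) x t" for t
    using fw[of t] by (simp add: einterval_iff zero_ereal_def)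
  have i1: "integrable lborel (w (k+1) x)" "integrable lborel (\<lambda>t. x * w k x t)"
    using k by (auto intro!: w_int)
  have "(LBINT t=0..\<infinity>. f t) = (\<integral>t. w (k+1) x t + x * w k x t - k * w (k-1) x t \<partial>lborel)"
    unfolding interval_lebesgue_integral_0_infty set_lebesgue_integral_def fw' ..
  also have "\<dots> = (\<integral>t. w (k+1) x t + x * w k x t \<partial>lborel) - (\<integral>t. k * w (k-1) x t \<partial>lborel)"
    using i1 i3 by (intro Bochner_Integration.integral_diff) auto
  also have "\<dots> = II (k+1) x + x * II k x - k * II (k-1) x"
    using i1 unfolding II_def by (simp add: Bochner_Integration.integral_add integral_mult_right_zero)
  finally have "(LBINT t=0..\<infinity>. f t) = II (k+1) x + x * II k x - k * II (k-1) x" .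
  with ftc show ?thesis by simp
qed



lemma II_CS: assumes k: "k > -1"
  shows "II (k+1) x ^ 2 < II k x * II (k+2) x"
proof -
  define l where "l = II (k+1) x / II k x"
  have I0: "0 < II k x" using II_pos k by blast
  have w2: "w (k+2) x t = t * (t * w k x t)" for t
    using w_Suc[of "k+1" x t] w_Suc[of k x t] by (simp add: add.assoc)
  have i: "integrable lborel (w k x)" "integrable lborel (w (k+1) x)" "integrable lborel (w (k+2) x)"
    using k by (auto intro!: w_int)
  have eq: "w k x t * (t - l)^2 = w (k+2) x t - 2 * l * w (k+1) x t + l^2 * w k x t" for t
    unfolding w2 w_Suc by (simp add: power2_eq_square algebra_simps)
  have "0 < (\<integral>t. w k x t * (t - l)^2 \<partial>lborel)"
  proof (rule integral_pos_lemma[where c=l])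
    show "integrable lborel (\<lambda>t. w k x t * (t - l)^2)" unfolding eq using i by auto
    show "0 \<le> w k x t * (t - l)^2" for t by (simp add: w_nonneg)
    show "0 < w k x t * (t - l)^2" if "0 < t" "t \<noteq> l" for t using that by (simp add: w_pos)
  qed
  also have "(\<integral>t. w k x t * (t - l)^2 \<partial>lborel) = II (k+2) x - 2 * l * II (k+1) x + l^2 * II k x"
    unfolding eq II_def using i by simp
  also have "\<dots> = II (k+2) x - II (k+1) x ^ 2 / II k x"
    using I0 by (simp add: l_def field_simps power2_eq_square)
  finally show ?thesis using I0 by (simp add: field_simps)
qed

definition hh :: "real \<Rightarrow> real \<Rightarrow> real \<Rightarrow> real" where
  "hh k x s = (if 0 < s then s powr k * exp (-s) * exp (-((s/x)^2)/2) else 0)"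

lemma hh_meas[measurable]: "hh k x \<in> borel_measurable borel"
  unfolding hh_def by measurable

lemma II_scale: assumes "x > 0"
  shows "x powr (k+1) * II k x = (\<integral>s. hh k x s \<partial>lborel)"
proof -
  have "II k x = \<bar>1/x\<bar> *\<^sub>R (\<integral>s. w k x (0 + 1/x * s) \<partial>lborel)"
    unfolding II_def using assms by (intro lborel_integral_real_affine) simp
  also have "(\<lambda>s. w k x (0 + 1/x * s)) = (\<lambda>s. (1 / x powr k) * hh k x s)"
  proof
    fix s
    show "w k x (0 + 1/x * s) = (1 / x powr k) * hh k x s"
    proof (cases "0 < s")
      case True
      have e: "exp (- ((s/x)^2/2) - s) = exp (-s) * exp (- ((s/x)^2/2))"
        by (simp add: exp_add[symmetric])
      have p: "(s/x) powr k = s powr k / x powr k"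
        using assms True by (simp add: powr_divide)
      have "0 < s/x" using assms True by simp
      thus ?thesis using True assms unfolding w_def hh_def by (simp add: e p)
    qed (use assms in \<open>simp add: w_def hh_def zero_less_divide_iff\<close>)
  qed
  finally have "II k x = (1/x) * ((1 / x powr k) * (\<integral>s. hh k x s \<partial>lborel))"
    using assms by simp
  thus ?thesis using assms by (simp add: powr_add field_simps)
qed

lemma II_asym: assumes k: "k > -1"
  shows "((\<lambda>x. x powr (k+1) * II k x) \<longlongrightarrow> Gamma (k+1)) at_top"
proof -
  have gi: "integrable lborel (gg k)" and gv: "integral\<^sup>L lborel (gg k) = Gamma (k+1)"
    using gg_has[OF k] by (auto simp: has_bochner_integral_iff)
  have "((\<lambda>x. integral\<^sup>L lborel (hh k x)) \<longlongrightarrow> integral\<^sup>L lborel (gg k)) at_top"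
  proof (rule integral_dominated_convergence_at_top[where w="gg k"])
    show "gg k \<in> borel_measurable lborel" "\<And>x. hh k x \<in> borel_measurable lborel" by simp_all
    show "integrable lborel (gg k)" by (fact gi)
    show "AE s in lborel. ((\<lambda>x. hh k x s) \<longlongrightarrow> gg k s) at_top"
    proof (rule AE_I2)
      fix s :: real
      have "((\<lambda>x. s/x) \<longlongrightarrow> 0) at_top"
        by (intro tendsto_divide_0[OF tendsto_const] filterlim_at_top_imp_at_infinity filterlim_ident)
      hence "((\<lambda>x. exp (-((s/x)^2)/2)) \<longlongrightarrow> exp (-(0^2)/2)) at_top"
        by (intro tendsto_intros) auto
      hence "((\<lambda>x. exp (-((s/x)^2)/2)) \<longlongrightarrow> 1) at_top" by simp
      hence "((\<lambda>x. s powr k * exp (-s) * exp (-((s/x)^2)/2)) \<longlongrightarrow> s powr k * exp (-s) * 1) at_top"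
        by (intro tendsto_intros)
      thus "((\<lambda>x. hh k x s) \<longlongrightarrow> gg k s) at_top"
        by (cases "0 < s") (auto simp: hh_def gg_def)
    qed
    show "\<forall>\<^sub>F x in at_top. AE s in lborel. norm (hh k x s) \<le> gg k s"
      by (intro always_eventually allI AE_I2) (auto simp: hh_def gg_def intro!: mult_left_le)
  qed
  moreover have "\<forall>\<^sub>F x in at_top. integral\<^sup>L lborel (hh k x) = x powr (k+1) * II k x"
    using eventually_gt_at_top[of 0] by eventually_elim (simp add: II_scale)
  ultimately show ?thesis using gv by (auto dest: tendsto_cong[THEN iffD1, rotated])
qed



definition FF :: "real \<Rightarrow> real \<Rightarrow> real" where
  "FF m x = exp (-(x^2)/4) * II m x / Gamma (m+1)"
definition FF' :: "real \<Rightarrow> real \<Rightarrow> real" where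
  "FF' m x = exp (-(x^2)/4) * (-(x/2) * II m x - II (m+1) x) / Gamma (m+1)"

lemma FF_pos: "m > -1 \<Longrightarrow> 0 < FF m x"
  unfolding FF_def by (intro divide_pos_pos mult_pos_pos II_pos) (auto intro: Gamma_real_pos)

lemma FF_deriv: assumes m: "m > -1"
  shows "(FF m has_real_derivative FF' m x) (at x)"
proof -
  note d1 = II_deriv[OF m]
  have G0: "Gamma (m+1) > 0" using m by (intro Gamma_real_pos) simp
  have Gc: "Gamma (1+m) = Gamma (m+1)" by (rule arg_cong[where f=Gamma]) simp
  have Ga: "Gamma (m+1) \<noteq> 0" using G0 by linarith
  have Gb: "Gamma (1+m) \<noteq> 0" using G0 unfolding Gc by linarith
  note G = Ga Gb
  show ?thesis unfolding FF_def[abs_def] FF'_def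
    by (auto intro!: derivative_eq_intros d1 simp: field_simps power2_eq_square G)
qed

lemma FF'_deriv: assumes m: "m > -1"
  shows "(FF' m has_real_derivative (x^2/4 + (m + 1/2)) * FF m x) (at x)"
proof -
  have m1: "m + 1 > -1" using m by simp
  note d1 = II_deriv[OF m] and d2 = II_deriv[OF m1]
  have d2': "(II (1+m) has_real_derivative - II (m+1+1) x) (at x)" using d2 by (simp add: add.commute)
  have G0: "Gamma (m+1) > 0" using m by (intro Gamma_real_pos) simp
  have Gc: "Gamma (1+m) = Gamma (m+1)" by (rule arg_cong[where f=Gamma]) simp
  have Ga: "Gamma (m+1) \<noteq> 0" using G0 by linarith
  have Gb: "Gamma (1+m) \<noteq> 0" using G0 unfolding Gc by linarith
  note G = Ga Gb
  have r: "II (m+1+1) x + x * II (m+1) x - (m+1) * II (m+1-1) x = 0"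
    using II_rec_gen[of "m+1" x] m by simp
  hence r': "II (m+1+1) x = (m+1) * II m x - x * II (m+1) x" by simp
  have "(FF' m has_real_derivative
      exp (-(x^2)/4) * (-(x/2)) * (-(x/2) * II m x - II (m+1) x) / Gamma (m+1)
      + exp (-(x^2)/4) * (-(1/2) * II m x + (x/2) * II (m+1) x + II (m+1+1) x) / Gamma (m+1)) (at x)"
    unfolding FF'_def[abs_def]
    by (auto intro!: derivative_eq_intros d1 d2 d2' simp: field_simps power2_eq_square G)
  also have "exp (-(x^2)/4) * (-(x/2)) * (-(x/2) * II m x - II (m+1) x) / Gamma (m+1)
      + exp (-(x^2)/4) * (-(1/2) * II m x + (x/2) * II (m+1) x + II (m+1+1) x) / Gamma (m+1)
      = (x^2/4 + (m + 1/2)) * FF m x"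
    unfolding FF_def r' using G by (simp add: field_simps power2_eq_square)
  finally show ?thesis .
qed

lemma deriv_FF: "m > -1 \<Longrightarrow> deriv (FF m) = FF' m"
  by (intro ext DERIV_imp_deriv FF_deriv)

lemma FF_lim: assumes m: "m > -1"
  shows "((\<lambda>x. FF m x / (x powr (-(m + 1/2) - 1/2) * exp (-(x^2)/4))) \<longlongrightarrow> 1) at_top"
proof -
  have G0: "Gamma (m+1) > 0" using m by (intro Gamma_real_pos) simp
  have G: "Gamma (m+1) \<noteq> 0" using G0 by linarith
  have "((\<lambda>x. x powr (m+1) * II m x / Gamma (m+1)) \<longlongrightarrow> Gamma (m+1) / Gamma (m+1)) at_top"
    using m by (intro tendsto_intros II_asym) (use G in auto)
  hence l: "((\<lambda>x. x powr (m+1) * II m x / Gamma (m+1)) \<longlongrightarrow> 1) at_top" by (simp add: G)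
  have "\<forall>\<^sub>F x in at_top. x powr (m+1) * II m x / Gamma (m+1) = FF m x / (x powr (-(m + 1/2) - 1/2) * exp (-(x^2)/4))"
    using eventually_gt_at_top[of 0]
  proof eventually_elim
    case (elim x)
    have "x powr (-(m + 1/2) - 1/2) = 1 / x powr (m+1)"
      using elim by (simp add: powr_minus_divide[symmetric] add_ac)
    thus ?case using elim G unfolding FF_def by (simp add: field_simps)
  qed
  with l show ?thesis by (auto dest: tendsto_cong[THEN iffD1, rotated])
qed



lemma no_escape:
  fixes \<phi> \<phi>' :: "real \<Rightarrow> real"
  assumes d: "\<And>x. x \<ge> X \<Longrightarrow> (\<phi> has_real_derivative \<phi>' x) (at x)"
    and ge: "\<And>x. x \<ge> X \<Longrightarrow> \<phi>' x \<ge> 1" and l: "(\<phi> \<longlongrightarrow> L) at_top"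
  shows False
proof -
  have inc: "\<phi> X + (x - X) \<le> \<phi> x" if "x \<ge> X" for x
  proof -
    have "(\<lambda>t. \<phi> t - t) X \<le> (\<lambda>t. \<phi> t - t) x"
    proof (rule DERIV_nonneg_imp_nondecreasing[OF that])
      fix t assume "X \<le> t" "t \<le> x"
      thus "\<exists>y. ((\<lambda>t. \<phi> t - t) has_real_derivative y) (at t) \<and> y \<ge> 0"
        using d[of t] ge[of t] by (intro exI[of _ "\<phi>' t - 1"]) (auto intro!: derivative_eq_intros)
    qed
    thus ?thesis by simp
  qed
  have "\<forall>\<^sub>F x in at_top. \<phi> x < L + 1" using order_tendstoD(2)[OF l, of "L+1"] by simp
  then obtain N where N: "\<And>x. x \<ge> N \<Longrightarrow> \<phi> x < L + 1" by (auto simp: eventually_at_top_linorder)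
  define x where "x = max N (max X (X + L + 1 - \<phi> X))"
  have "\<phi> x < L + 1" using N by (simp add: x_def)
  moreover have "\<phi> X + (x - X) \<le> \<phi> x" by (rule inc) (simp add: x_def)
  moreover have "x \<ge> X + L + 1 - \<phi> X" by (simp add: x_def)
  ultimately show False by linarith
qed

lemma pcf_U_eq: assumes a: "a > -1/2"
  shows "pcf_U a = FF (a - 1/2)"
proof -
  define m where "m = a - 1/2"
  have m: "m > -1" using a by (simp add: m_def)
  have aeq: "a = m + 1/2" by (simp add: m_def)
  have dF: "deriv (FF m) = FF' m" by (rule deriv_FF[OF m])
  have "(THE f. (\<forall>x. (f has_real_derivative deriv f x) (at x) \<and>
                            (deriv f has_real_derivative (x^2/4 + a) * f x) (at x)) \<and>
                ((\<lambda>x. f x / (x powr (-a - 1/2) * exp (-(x^2)/4))) \<longlongrightarrow> 1) at_top) = FF m"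
  proof (rule the_equality)
    show "(\<forall>x. (FF m has_real_derivative deriv (FF m) x) (at x) \<and>
                 (deriv (FF m) has_real_derivative (x^2/4 + a) * FF m x) (at x)) \<and>
          ((\<lambda>x. FF m x / (x powr (-a - 1/2) * exp (-(x^2)/4))) \<longlongrightarrow> 1) at_top"
      unfolding dF aeq using FF_deriv[OF m] FF'_deriv[OF m] FF_lim[OF m] by auto
  next
    fix g assume g: "(\<forall>x. (g has_real_derivative deriv g x) (at x) \<and>
                            (deriv g has_real_derivative (x^2/4 + a) * g x) (at x)) \<and>
                ((\<lambda>x. g x / (x powr (-a - 1/2) * exp (-(x^2)/4))) \<longlongrightarrow> 1) at_top"
    define g' where "g' = deriv g"
    define F where "F = FF m"
    define F' where "F' = FF' m"
    define ref where "ref x = x powr (-(m+1/2) - 1/2) * exp (-(x^2)/4)" for x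
    have dg: "\<And>x. (g has_real_derivative g' x) (at x)" using g unfolding g'_def by blast
    have ddg: "\<And>x. (g' has_real_derivative (x^2/4 + (m+1/2)) * g x) (at x)"
      using g unfolding g'_def aeq by blast
    have lg: "((\<lambda>x. g x / ref x) \<longlongrightarrow> 1) at_top" using g unfolding ref_def aeq by blast
    have lF: "((\<lambda>x. F x / ref x) \<longlongrightarrow> 1) at_top" using FF_lim[OF m] unfolding ref_def F_def .
    have dF1: "\<And>x. (F has_real_derivative F' x) (at x)" unfolding F_def F'_def by (rule FF_deriv[OF m])
    have dF2: "\<And>x. (F' has_real_derivative (x^2/4 + (m+1/2)) * F x) (at x)"
      unfolding F_def F'_def by (rule FF'_deriv[OF m])
    have Fpos: "\<And>x. F x > 0" unfolding F_def by (rule FF_pos[OF m])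
    define W where "W x = F x * g' x - F' x * g x" for x
    have dW: "(W has_real_derivative 0) (at x)" for x
    proof -
      have "((\<lambda>x. F x * g' x - F' x * g x) has_real_derivative 0) (at x)"
        using DERIV_diff[OF DERIV_mult[OF dF1 ddg] DERIV_mult[OF dF2 dg], of x]
        by (simp add: algebra_simps)
      thus ?thesis unfolding W_def[abs_def] .
    qed
    have Wc: "W x = W 0" for x using dW by (intro DERIV_isconst_all) auto
    define \<phi> where "\<phi> x = g x / F x" for x
    have dphi: "(\<phi> has_real_derivative W 0 / (F x)^2) (at x)" for x
    proof -
      have "(\<phi> has_real_derivative (g' x * F x - g x * F' x) / (F x * F x)) (at x)"
        unfolding \<phi>_def[abs_def] using Fpos[of x] by (intro derivative_intros dg dF1) auto
      moreover have "g' x * F x - g x * F' x = W 0" using Wc[of x] by (simp add: W_def mult.commute)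
      ultimately show ?thesis by (simp add: power2_eq_square)
    qed
    have lref: "(ref \<longlongrightarrow> 0) at_top" unfolding ref_def by real_asymp
    have evr: "\<forall>\<^sub>F x in at_top. ref x \<noteq> 0"
      using eventually_gt_at_top[of 0] by eventually_elim (simp add: ref_def)
    have F0: "(F \<longlongrightarrow> 0) at_top"
    proof -
      have "((\<lambda>x. F x / ref x * ref x) \<longlongrightarrow> 1 * 0) at_top" by (intro tendsto_intros lF lref)
      moreover have "\<forall>\<^sub>F x in at_top. F x / ref x * ref x = F x"
        using evr by eventually_elim simp
      ultimately show ?thesis by (auto dest: tendsto_cong[THEN iffD1, rotated])
    qed
    have lphi: "(\<phi> \<longlongrightarrow> 1) at_top"
    proof -
      have "((\<lambda>x. (g x / ref x) / (F x / ref x)) \<longlongrightarrow> 1 / 1) at_top" by (intro tendsto_intros lF lg) auto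
      moreover have "\<forall>\<^sub>F x in at_top. (g x / ref x) / (F x / ref x) = \<phi> x"
        using evr by eventually_elim (simp add: \<phi>_def)
      ultimately show ?thesis by (auto dest: tendsto_cong[THEN iffD1, rotated])
    qed
    have F2: "((\<lambda>x. (F x)^2) \<longlongrightarrow> 0) at_top" using tendsto_power[OF F0, of 2] by simp
    have W0: "W 0 = 0"
    proof (rule ccontr)
      assume ne: "W 0 \<noteq> 0"
      have "\<forall>\<^sub>F x in at_top. (F x)^2 < \<bar>W 0\<bar>" using order_tendstoD(2)[OF F2, of "\<bar>W 0\<bar>"] ne by simp
      then obtain X where X: "\<And>x. x \<ge> X \<Longrightarrow> (F x)^2 < \<bar>W 0\<bar>" by (auto simp: eventually_at_top_linorder)
      have q: "1 \<le> \<bar>W 0\<bar> / (F x)^2" if "x \<ge> X" for x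
        using X[OF that] Fpos[of x] by (simp add: field_simps)
      show False
      proof (cases "W 0 > 0")
        case True
        show False
          by (rule no_escape[of X \<phi> "\<lambda>x. W 0 / (F x)^2" 1]) (use dphi q True lphi in auto)
      next
        case False
        show False
        proof (rule no_escape[of X "\<lambda>x. - \<phi> x" "\<lambda>x. - (W 0 / (F x)^2)" "-1"])
          show "((\<lambda>x. - \<phi> x) has_real_derivative - (W 0 / (F x)^2)) (at x)" for x
            by (intro derivative_intros dphi)
          show "1 \<le> - (W 0 / (F x)^2)" if "X \<le> x" for x using q[OF that] False ne by simp
          show "((\<lambda>x. - \<phi> x) \<longlongrightarrow> -1) at_top" by (intro tendsto_intros lphi)
        qed
      qed
    qed
    have phix: "\<phi> x = \<phi> 0" for x using dphi W0 by (intro DERIV_isconst_all) auto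
    have "(\<phi> \<longlongrightarrow> \<phi> 0) at_top" by (intro tendsto_eventually always_eventually allI phix)
    hence p0: "\<phi> 0 = 1" using lphi by (intro tendsto_unique[of at_top]) auto
    show "g = FF m"
    proof
      fix x
      have "\<phi> x = 1" using phix[of x] p0 by simp
      thus "g x = FF m x" using Fpos[of x] by (simp add: \<phi>_def F_def)
    qed
  qed
  thus ?thesis unfolding pcf_U_def m_def .
qed



lemma ub:
  fixes I0 I1 I2 x m :: real
  assumes I0: "I0 > 0" and m: "m > -1" and rec: "I2 + x*I1 = (m+1)*I0" and cs: "I1^2 < I0*I2"
  shows "- sqrt (x^2/4 + m + 1) < (-(x/2)*I0 - I1)/I0"
proof -
  define h where "h = x/2 + I1/I0"
  define S where "S = x^2/4 + m + 1"
  have r: "(-(x/2)*I0 - I1)/I0 = -h" using I0 by (simp add: h_def field_simps)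
  have hI: "h * I0 = x*I0/2 + I1" using I0 by (simp add: h_def field_simps)
  have e1: "S * I0^2 = x^2/4*I0^2 + ((m+1)*I0)*I0" by (simp add: S_def power2_eq_square algebra_simps)
  have e2: "(x*I0/2 + I1)^2 = x^2/4*I0^2 + x*I1*I0 + I1^2" by (simp add: power2_eq_square algebra_simps)
  have e3: "((m+1)*I0)*I0 = I2*I0 + x*I1*I0" unfolding rec[symmetric] by (simp add: algebra_simps)
  have cs': "I1^2 < I2*I0" using cs by (simp add: mult.commute)
  have "(h*I0)^2 < S * I0^2" unfolding hI e1 e2 e3 using cs' by linarith
  hence "h^2 * I0^2 < S * I0^2" by (simp add: power_mult_distrib)
  hence "h^2 < S" using I0 by simp
  hence "h < sqrt S" by (rule real_less_rsqrt)
  thus ?thesis unfolding r S_def by simp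
qed

lemma lb:
  fixes I0 I1 x m :: real
  assumes I0: "I0 > 0" and I1: "I1 > 0" and P: "I1 + x*I0 > 0" and key: "I1 * (I1 + x*I0) > m * I0^2"
  shows "(-(x/2)*I0 - I1)/I0 < - sqrt (x^2/4 + m)"
proof -
  define h where "h = x/2 + I1/I0"
  define T where "T = x^2/4 + m"
  have r: "(-(x/2)*I0 - I1)/I0 = -h" using I0 by (simp add: h_def field_simps)
  have hI: "h * I0 = x*I0/2 + I1" using I0 by (simp add: h_def field_simps)
  have "h * I0 > 0" unfolding hI using P I1 by linarith
  hence hpos: "h > 0" using I0 by (simp add: zero_less_mult_iff)
  have e1: "T * I0^2 = x^2/4*I0^2 + m * I0^2" by (simp add: T_def algebra_simps)
  have e2: "(x*I0/2 + I1)^2 = x^2/4*I0^2 + (I1 * (I1 + x*I0))" by (simp add: power2_eq_square algebra_simps)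
  have "T * I0^2 < (h*I0)^2" unfolding hI e1 e2 using key by linarith
  hence "T * I0^2 < h^2 * I0^2" by (simp add: power_mult_distrib)
  hence "T < h^2" using I0 by simp
  hence "sqrt T < h" using hpos by (intro real_less_lsqrt) auto
  thus ?thesis unfolding r T_def by simp
qed

lemma ratio_eq: assumes m: "m > -1"
  shows "FF' m x / FF m x = (-(x/2) * II m x - II (m+1) x) / II m x"
proof -
  have G0: "Gamma (m+1) > 0" using m by (intro Gamma_real_pos) simp
  have G: "Gamma (m+1) \<noteq> 0" using G0 by linarith
  have "II m x > 0" using II_pos m by blast
  thus ?thesis unfolding FF_def FF'_def using G by (simp add: field_simps)
qed

theorem theorem12:
  fixes n x :: real
  shows "(n \<ge> 1/2 \<longrightarrow>
            - sqrt (x^2/4 + n + 1/2) < pcf_U' n x / pcf_U n x \<and>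
            pcf_U' n x / pcf_U n x < - sqrt (x^2/4 + n - 1/2)) \<and>
         (n > -1/2 \<longrightarrow> - sqrt (x^2/4 + n + 1/2) < pcf_U' n x / pcf_U n x)"
proof -
  have main: "- sqrt (x^2/4 + n + 1/2) < pcf_U' n x / pcf_U n x \<and>
     (n \<ge> 1/2 \<longrightarrow> pcf_U' n x / pcf_U n x < - sqrt (x^2/4 + n - 1/2))" if n: "n > -1/2"
  proof -
    define m where "m = n - 1/2"
    have m: "m > -1" using n by (simp add: m_def)
    have U: "pcf_U n = FF m" unfolding m_def by (rule pcf_U_eq[OF n])
    have U': "pcf_U' n x = FF' m x" unfolding pcf_U'_def U deriv_FF[OF m] ..
    have rat: "pcf_U' n x / pcf_U n x = (-(x/2) * II m x - II (m+1) x) / II m x"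
      unfolding U U' by (rule ratio_eq[OF m])
    have I0: "II m x > 0" using II_pos m by blast
    have I1: "II (m+1) x > 0" using II_pos m by simp
    have r0: "II (m+1+1) x + x * II (m+1) x - (m+1) * II (m+1-1) x = 0"
      using II_rec_gen[of "m+1" x] m by simp
    have e1: "m+1+1 = m+2" "m+1-1 = m" by simp_all
    have rec: "II (m+2) x + x * II (m+1) x = (m+1) * II m x"
      using r0 unfolding e1 by simp
    have cs: "II (m+1) x ^ 2 < II m x * II (m+2) x" by (rule II_CS[OF m])
    have s1: "x^2/4 + n + 1/2 = x^2/4 + m + 1" by (simp add: m_def)
    have s2: "x^2/4 + n - 1/2 = x^2/4 + m" by (simp add: m_def)
    have up: "- sqrt (x^2/4 + n + 1/2) < pcf_U' n x / pcf_U n x"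
      unfolding rat s1 by (rule ub[OF I0 m rec cs])
    have low: "pcf_U' n x / pcf_U n x < - sqrt (x^2/4 + n - 1/2)" if n2: "n \<ge> 1/2"
    proof -
      have m0: "m \<ge> 0" using n2 by (simp add: m_def)
      have P: "II (m+1) x + x * II m x > 0 \<and> II (m+1) x * (II (m+1) x + x * II m x) > m * (II m x)^2"
      proof (cases "m = 0")
        case True
        have "II (0+1) x + x * II 0 x - 0 * II (0-1) x = 1" using II_rec_gen[of 0 x] by simp
        hence "II (m+1) x + x * II m x = 1" using True by simp
        thus ?thesis using I1 True by simp
      next
        case False
        hence mp: "m > 0" using m0 by simp
        have "II (m+1) x + x * II m x - m * II (m-1) x = 0" using II_rec_gen[of m x] mp by simp
        hence Pe: "II (m+1) x + x * II m x = m * II (m-1) x" by simp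
        have Im1: "II (m-1) x > 0" using II_pos[of "m-1" x] mp by simp
        have cs2: "II (m-1+1) x ^ 2 < II (m-1) x * II (m-1+2) x" by (rule II_CS) (use mp in simp)
        have e2: "m-1+1 = m" "m-1+2 = m+1" by simp_all
        from cs2 have cs3: "II m x ^ 2 < II (m-1) x * II (m+1) x" unfolding e2 .
        have "m * (II m x)^2 < m * (II (m-1) x * II (m+1) x)"
          using cs3 mp by (intro mult_strict_left_mono) auto
        also have "\<dots> = II (m+1) x * (II (m+1) x + x * II m x)" unfolding Pe by (simp add: algebra_simps)
        finally show ?thesis unfolding Pe using mp Im1 by simp
      qed
      show ?thesis unfolding rat s2 using lb[OF I0 I1] P by blast
    qed
    show ?thesis using up low by blast
  qed
  show ?thesis using main by force
qed

end
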